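(* Let $G$ be a graph with minimum degree $\delta$ and order $n$, where $n\ge 2\delta+2$. Then $\gamma_{\rm i}(G)=n-\delta$ if and only if $G$ contains a spanning subgraph isomorphic to $K_{\delta,n-\delta}$ such that the part of the bipartition of size $n-\delta$ is an independent set in $G$.
   Context: All graphs are finite and simple. Indicated domination game on $G$: two players, Dominator and Staller, alternate. In each round Dominator indicates a vertex $v$ not yet dominated by the vertices previously selected by Staller (a vertex dominates itself and its neighbors), and Staller must select a vertex of the closed neighborhood $N[v]$, adding it to a set $D$. The game ends when $D$ is a dominating set of $G$. Dominator wants to minimize $|D|$ and Staller to maximize it; the size of $D$ under optimal play of both is the indicated domination number $\gamma_{\rm i}(G)$. *)

theory Defs
  imports Main
begin

definition simple_graph :: "'a set \<Rightarrow> ('a \<Rightarrow> 'a \<Rightarrow> bool) \<Rightarrow> bool" where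
  "simple_graph V E \<longleftrightarrow> finite V \<and> (\<forall>u v. E u v \<longrightarrow> u \<in> V \<and> v \<in> V)
     \<and> (\<forall>u v. E u v \<longrightarrow> E v u) \<and> (\<forall>v. \<not> E v v)"

definition closed_nbhd :: "'a set \<Rightarrow> ('a \<Rightarrow> 'a \<Rightarrow> bool) \<Rightarrow> 'a \<Rightarrow> 'a set" where
  "closed_nbhd V E v = {u \<in> V. u = v \<or> E v u}"

definition degree :: "'a set \<Rightarrow> ('a \<Rightarrow> 'a \<Rightarrow> bool) \<Rightarrow> 'a \<Rightarrow> nat" where
  "degree V E v = card {u \<in> V. E v u}"

definition min_degree :: "'a set \<Rightarrow> ('a \<Rightarrow> 'a \<Rightarrow> bool) \<Rightarrow> nat" where
  "min_degree V E = Min (degree V E ` V)"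

definition dominated :: "'a set \<Rightarrow> ('a \<Rightarrow> 'a \<Rightarrow> bool) \<Rightarrow> 'a set \<Rightarrow> 'a set" where
  "dominated V E D = (\<Union>d\<in>D. closed_nbhd V E d)"

definition dominating :: "'a set \<Rightarrow> ('a \<Rightarrow> 'a \<Rightarrow> bool) \<Rightarrow> 'a set \<Rightarrow> bool" where
  "dominating V E D \<longleftrightarrow> V \<subseteq> dominated V E D"

text \<open>Value of the indicated domination game from position D (the set of vertices
  selected so far by Staller), with at most k further rounds available (fuel).
  Dominator indicates an undominated vertex v (minimising), Staller selects a vertex
  of N[v] (maximising); each round adds one new vertex of V to D, so with fuel
  card V starting from the empty set the game always terminates before fuel runs out.\<close>
fun game_val :: "'a set \<Rightarrow> ('a \<Rightarrow> 'a \<Rightarrow> bool) \<Rightarrow> nat \<Rightarrow> 'a set \<Rightarrow> nat" where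
  "game_val V E 0 D = 0"
| "game_val V E (Suc k) D =
     (if dominating V E D then 0
      else Min ((\<lambda>v. Max ((\<lambda>u. 1 + game_val V E k (insert u D)) ` closed_nbhd V E v))
                 ` (V - dominated V E D)))"

definition indicated_domination_number :: "'a set \<Rightarrow> ('a \<Rightarrow> 'a \<Rightarrow> bool) \<Rightarrow> nat" where
  "indicated_domination_number V E = game_val V E (card V) {}"

definition spanning_Kst_indep :: "'a set \<Rightarrow> ('a \<Rightarrow> 'a \<Rightarrow> bool) \<Rightarrow> nat \<Rightarrow> nat \<Rightarrow> bool" where
  "spanning_Kst_indep V E s t \<longleftrightarrow> (\<exists>A B. A \<union> B = V \<and> A \<inter> B = {} \<and> card A = s \<and> card B = t
      \<and> (\<forall>a\<in>A. \<forall>b\<in>B. E a b) \<and> (\<forall>b\<in>B. \<forall>b'\<in>B. \<not> E b b'))"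

end

theory Submission
  imports Defs
begin

lemma sgD:
  assumes "simple_graph V E"
  shows "finite V" "E u v \<Longrightarrow> u \<in> V" "E u v \<Longrightarrow> v \<in> V" "E u v \<Longrightarrow> E v u" "\<not> E v v"
  using assms unfolding simple_graph_def by blast+

lemma cn_sub: "closed_nbhd V E v \<subseteq> V"
  unfolding closed_nbhd_def by blast

lemma cn_self: "v \<in> V \<Longrightarrow> v \<in> closed_nbhd V E v"
  unfolding closed_nbhd_def by blast

lemma cn_sym: "simple_graph V E \<Longrightarrow> u \<in> closed_nbhd V E v \<Longrightarrow> v \<in> V \<Longrightarrow> v \<in> closed_nbhd V E u"
  unfolding closed_nbhd_def simple_graph_def by blast

lemma dom_insert: "dominated V E (insert u D) = closed_nbhd V E u \<union> dominated V E D"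
  unfolding dominated_def by simp

lemma dom_empty: "dominated V E {} = {}"
  unfolding dominated_def by simp

lemma dom_sub: "dominated V E D \<subseteq> V"
  unfolding dominated_def closed_nbhd_def by blast

lemma cn_eq: "closed_nbhd V E v = insert v {w \<in> V. E v w}" if "v \<in> V"
  using that unfolding closed_nbhd_def by blast

lemma card_cn:
  assumes "simple_graph V E" "v \<in> V"
  shows "card (closed_nbhd V E v) = Suc (degree V E v)"
proof -
  have "v \<notin> {w \<in> V. E v w}" using sgD(5)[OF assms(1)] by blast
  moreover have "finite {w \<in> V. E v w}" using sgD(1)[OF assms(1)] by simp
  ultimately show ?thesis using cn_eq[OF assms(2)] unfolding degree_def by simp
qed

lemma step_bound:
  assumes sg: "simple_graph V E" and v: "v \<in> V - dominated V E D"
    and h: "\<And>u. u \<in> closed_nbhd V E v \<Longrightarrow> 1 + game_val V E k (insert u D) \<le> c"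
  shows "game_val V E (Suc k) D \<le> c"
proof -
  define F where "F = (\<lambda>v. Max ((\<lambda>u. 1 + game_val V E k (insert u D)) ` closed_nbhd V E v))"
  have vV: "v \<in> V" and vnd: "v \<notin> dominated V E D" using v by auto
  have nd: "\<not> dominating V E D" using vV vnd unfolding dominating_def by blast
  have fin: "finite (closed_nbhd V E v)" using finite_subset[OF cn_sub sgD(1)[OF sg]] .
  have ne: "closed_nbhd V E v \<noteq> {}" using cn_self[OF vV] by blast
  have M: "F v \<le> c" unfolding F_def
  proof (rule Max.boundedI)
    show "finite ((\<lambda>u. 1 + game_val V E k (insert u D)) ` closed_nbhd V E v)" using fin by simp
    show "(\<lambda>u. 1 + game_val V E k (insert u D)) ` closed_nbhd V E v \<noteq> {}" using ne by simp
    fix a assume "a \<in> (\<lambda>u. 1 + game_val V E k (insert u D)) ` closed_nbhd V E v"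
    then obtain u where "u \<in> closed_nbhd V E v" "a = 1 + game_val V E k (insert u D)" by blast
    then show "a \<le> c" using h by simp
  qed
  have finV: "finite (V - dominated V E D)" using sgD(1)[OF sg] by simp
  have eq: "game_val V E (Suc k) D = Min (F ` (V - dominated V E D))"
    using nd unfolding F_def by simp
  have "Min (F ` (V - dominated V E D)) \<le> F v"
    using finV v by (intro Min_le) auto
  then show ?thesis using eq M by linarith
qed

lemma ub:
  assumes sg: "simple_graph V E"
  shows "game_val V E k D \<le> card (V - dominated V E D)"
proof (induction k arbitrary: D)
  case 0
  then show ?case by simp
next
  case (Suc k)
  show ?case
  proof (cases "dominating V E D")
    case True
    then show ?thesis by simp
  next
    case False
    then obtain v where v: "v \<in> V - dominated V E D" unfolding dominating_def by blast
    show ?thesis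
    proof (rule step_bound[OF sg v])
      fix u assume u: "u \<in> closed_nbhd V E v"
      have "v \<in> closed_nbhd V E u" using cn_sym[OF sg u] v by blast
      hence sub: "V - dominated V E (insert u D) \<subseteq> (V - dominated V E D) - {v}"
        unfolding dom_insert by blast
      have fin: "finite (V - dominated V E D)" using sgD(1)[OF sg] by simp
      have "card (V - dominated V E (insert u D)) \<le> card ((V - dominated V E D) - {v})"
        using sub fin by (intro card_mono) auto
      also have "\<dots> = card (V - dominated V E D) - 1" using v fin by simp
      finally have "card (V - dominated V E (insert u D)) \<le> card (V - dominated V E D) - 1" .
      moreover have "card (V - dominated V E D) \<ge> 1" using v fin
        by (metis One_nat_def Suc_leI card_gt_0_iff empty_iff)
      moreover note Suc.IH[of "insert u D"]
      ultimately show "1 + game_val V E k (insert u D) \<le> card (V - dominated V E D)" by linarith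
    qed
  qed
qed

lemma lb:
  assumes sg: "simple_graph V E" and AB: "A \<union> B = V" "A \<inter> B = {}"
    and comp: "\<forall>a\<in>A. \<forall>b\<in>B. E a b" and ind: "\<forall>b\<in>B. \<forall>b'\<in>B. \<not> E b b'"
    and Bne: "B \<noteq> {}"
  shows "D \<subseteq> B \<Longrightarrow> min k (card (B - D)) \<le> game_val V E k D"
proof (induction k arbitrary: D)
  case 0
  then show ?case by simp
next
  case (Suc k)
  have finB: "finite B" using AB sgD(1)[OF sg] by blast
  show ?case
  proof (cases "dominating V E D")
    case True
    have "B \<subseteq> D"
    proof
      fix b assume b: "b \<in> B"
      then have "b \<in> dominated V E D" using True AB unfolding dominating_def by blast
      then obtain d where d: "d \<in> D" "b \<in> closed_nbhd V E d" unfolding dominated_def by blast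
      then have "b = d \<or> E d b" unfolding closed_nbhd_def by blast
      then show "b \<in> D" using d Suc.prems ind b by blast
    qed
    then have "B - D = {}" by blast
    then have c0: "card (B - D) = 0" by (metis card.empty)
    show ?thesis using True c0 by simp
  next
    case False
    define F where "F = (\<lambda>v. Max ((\<lambda>u. 1 + game_val V E k (insert u D)) ` closed_nbhd V E v))"
    have eq: "game_val V E (Suc k) D = Min (F ` (V - dominated V E D))"
      using False unfolding F_def by simp
    have finV: "finite (V - dominated V E D)" using sgD(1)[OF sg] by simp
    have neV: "V - dominated V E D \<noteq> {}" using False dom_sub unfolding dominating_def by blast
    have "min (Suc k) (card (B - D)) \<le> F v" if v: "v \<in> V - dominated V E D" for v
    proof -
      obtain u where u: "u \<in> closed_nbhd V E v" "u \<in> B" "u \<notin> D"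
      proof (cases "v \<in> B")
        case True
        have "v \<notin> D" using v cn_self[of v V E] unfolding dominated_def by blast
        then show ?thesis using that[of v] True v cn_self[of v V E] by blast
      next
        case False
        then have vA: "v \<in> A" using v AB by blast
        obtain b where b: "b \<in> B" using Bne by blast
        have Evb: "E v b" using comp vA b by blast
        have "b \<notin> D"
        proof
          assume "b \<in> D"
          moreover have "v \<in> closed_nbhd V E b" using Evb sgD[OF sg] unfolding closed_nbhd_def by blast
          ultimately show False using v unfolding dominated_def by blast
        qed
        moreover have "b \<in> closed_nbhd V E v" using Evb sgD[OF sg] unfolding closed_nbhd_def by blast
        ultimately show ?thesis using that b by blast
      qed
      have fin: "finite (closed_nbhd V E v)" using cn_sub sgD(1)[OF sg] finite_subset by metis
      have "1 + game_val V E k (insert u D) \<le> F v"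
        unfolding F_def using fin u(1) by (intro Max_ge) auto
      moreover have "min k (card (B - insert u D)) \<le> game_val V E k (insert u D)"
        using Suc.IH[of "insert u D"] Suc.prems u by blast
      moreover have "card (B - insert u D) = card (B - D) - 1" using u finB
        by (metis Diff_insert card_Diff_singleton finite_Diff insert_Diff1 DiffI)
      moreover have "card (B - D) \<ge> 1" using u finB
        by (metis DiffI One_nat_def Suc_leI card_gt_0_iff empty_iff finite_Diff)
      ultimately show ?thesis by linarith
    qed
    then show ?thesis unfolding eq using finV neV by (simp add: Min_ge_iff)
  qed
qed

lemma struct:
  assumes sg: "simple_graph V E" and u: "u \<in> V" and du: "degree V E u = d"
    and dge: "\<forall>w\<in>V. d \<le> degree V E w" and nV: "card V \<ge> 2 * d + 2"
    and hyp: "\<forall>z \<in> V - closed_nbhd V E u. \<exists>y\<in>closed_nbhd V E z.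
                 closed_nbhd V E y \<inter> (V - closed_nbhd V E u) = {z}"
  shows "spanning_Kst_indep V E d (card V - d)"
proof -
  have finV: "finite V" using sgD(1)[OF sg] .
  define U where "U = V - closed_nbhd V E u"
  define A where "A = {w \<in> V. E u w}"
  have cnu: "closed_nbhd V E u = insert u A" unfolding A_def using cn_eq[OF u] .
  have uA: "u \<notin> A" unfolding A_def using sgD(5)[OF sg] by blast
  have AV: "A \<subseteq> V" unfolding A_def by blast
  have finA: "finite A" using AV finV finite_subset by blast
  have cardA: "card A = d" using du unfolding degree_def A_def .
  have cardcn: "card (closed_nbhd V E u) = Suc d" using card_cn[OF sg u] du by simp
  have cardU: "card U = card V - Suc d" unfolding U_def
    using card_Diff_subset[OF finite_subset[OF cn_sub finV] cn_sub] cardcn by simp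
  have UV: "U \<subseteq> V" unfolding U_def by blast
  have "\<forall>z\<in>U. \<exists>y. y \<in> closed_nbhd V E z \<and> closed_nbhd V E y \<inter> U = {z}"
    using hyp unfolding U_def by blast
  then have "\<exists>f. \<forall>z\<in>U. f z \<in> closed_nbhd V E z \<and> closed_nbhd V E (f z) \<inter> U = {z}"
    by (rule bchoice)
  then obtain f where f: "\<forall>z\<in>U. f z \<in> closed_nbhd V E z \<and> closed_nbhd V E (f z) \<inter> U = {z}"
    by blast
  have fU1: "f z \<in> closed_nbhd V E z" if "z \<in> U" for z using f that by simp
  have fU2: "closed_nbhd V E (f z) \<inter> U = {z}" if "z \<in> U" for z using f that by simp
  have notu: "\<not> E z u" "z \<noteq> u" if "z \<in> U" for z
  proof -
    have "z \<notin> closed_nbhd V E u" "z \<in> V" using that unfolding U_def by auto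
    then have "\<not> E u z" "z \<noteq> u" unfolding closed_nbhd_def by auto
    then show "\<not> E z u" "z \<noteq> u" using sgD(4)[OF sg, of z u] by auto
  qed
  have key: "{w \<in> V. E z w} = A" if z: "z \<in> U" "f z \<notin> A" for z
  proof -
    have fz: "f z \<in> closed_nbhd V E z" "closed_nbhd V E (f z) \<inter> U = {z}" using fU1[OF z(1)] fU2[OF z(1)] by blast+
    have fzV: "f z \<in> V" using fz(1) cn_sub[of V E z] by blast
    have "f z \<noteq> u"
    proof
      assume "f z = u"
      then have "u = z \<or> E z u" using fz(1) unfolding closed_nbhd_def by blast
      then show False using notu[OF z(1)] by blast
    qed
    then have "f z \<notin> insert u A" using z(2) by blast
    then have "f z \<notin> closed_nbhd V E u" using cnu by metis
    then have "f z \<in> U" using fzV unfolding U_def by blast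
    then have "f z \<in> closed_nbhd V E (f z) \<inter> U" using cn_self[OF fzV] by simp
    then have "f z = z" using fz(2) by simp
    then have cz: "closed_nbhd V E z \<inter> U = {z}" using fz(2) by simp
    have sub: "{w \<in> V. E z w} \<subseteq> A"
    proof
      fix w assume w: "w \<in> {w \<in> V. E z w}"
      then have wV: "w \<in> V" and Ezw: "E z w" by auto
      have "w \<noteq> u" using notu[OF z(1)] Ezw by blast
      moreover have "w \<notin> U"
      proof
        assume "w \<in> U"
        then have "w \<in> closed_nbhd V E z \<inter> U" using wV Ezw unfolding closed_nbhd_def by blast
        then have "w = z" using cz by blast
        then show False using Ezw sgD(5)[OF sg] by blast
      qed
      ultimately show "w \<in> A" using wV cnu unfolding U_def by blast
    qed
    have "card {w \<in> V. E z w} \<ge> d" using dge z(1) UV unfolding degree_def by blast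
    then have "card {w \<in> V. E z w} = card A" using card_mono[OF finA sub] cardA by simp
    then show ?thesis using card_subset_eq[OF finA sub] by simp
  qed
  have "\<exists>z\<in>U. f z \<notin> A"
  proof (rule ccontr)
    assume "\<not> (\<exists>z\<in>U. f z \<notin> A)"
    then have img: "f ` U \<subseteq> A" by blast
    have "inj_on f U"
    proof (rule inj_onI)
      fix x y assume xy: "x \<in> U" "y \<in> U" "f x = f y"
      have "{x} = closed_nbhd V E (f x) \<inter> U" using fU2[OF xy(1)] by (rule sym)
      also have "\<dots> = closed_nbhd V E (f y) \<inter> U" using xy(3) by (rule arg_cong)
      also have "\<dots> = {y}" by (rule fU2[OF xy(2)])
      finally have "{x} = {y}" .
      then show "x = y" by simp
    qed
    then have "card U \<le> card A" using card_inj_on_le[OF _ img finA] by simp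
    moreover have "card U \<ge> d + 1" using cardU nV by arith
    ultimately show False using cardA by simp
  qed
  then obtain z0 where z0: "z0 \<in> U" "f z0 \<notin> A" by blast
  have hz0: "{w \<in> V. E z0 w} = A" using key[OF z0] .
  have allU: "{w \<in> V. E z w} = A" if z: "z \<in> U" for z
  proof (cases "f z \<in> A")
    case False
    then show ?thesis using key z by blast
  next
    case True
    then have "E z0 (f z)" using hz0 by blast
    then have "E (f z) z0" using sgD(4)[OF sg] by blast
    then have "z0 \<in> closed_nbhd V E (f z) \<inter> U" using z0(1) UV unfolding closed_nbhd_def by blast
    moreover have "closed_nbhd V E (f z) \<inter> U = {z}" using fU2 z by blast
    ultimately have "z0 = z" by blast
    then show ?thesis using True z0(2) by blast
  qed
  define B where "B = V - A"
  have Bcases: "b = u \<or> b \<in> U" if "b \<in> B" for b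
    using that cnu unfolding B_def U_def by blast
  show ?thesis unfolding spanning_Kst_indep_def
  proof (intro exI conjI)
    show "A \<union> B = V" using AV unfolding B_def by blast
    show "A \<inter> B = {}" unfolding B_def by blast
    show "card A = d" by (rule cardA)
    show "card B = card V - d" unfolding B_def using card_Diff_subset[OF finA AV] cardA by simp
    show "\<forall>a\<in>A. \<forall>b\<in>B. E a b"
    proof (intro ballI)
      fix a b assume a: "a \<in> A" and b: "b \<in> B"
      show "E a b"
      proof (cases "b = u")
        case True
        then show ?thesis using a sgD(4)[OF sg] unfolding A_def by blast
      next
        case False
        then have "b \<in> U" using Bcases b by blast
        then have "E b a" using allU a by blast
        then show ?thesis using sgD(4)[OF sg] by blast
      qed
    qed
    show "\<forall>b\<in>B. \<forall>b'\<in>B. \<not> E b b'"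
    proof (intro ballI notI)
      fix b b' assume b: "b \<in> B" and b': "b' \<in> B" and E: "E b b'"
      have b'V: "b' \<in> V" using E sgD(3)[OF sg] by blast
      show False
      proof (cases "b = u")
        case True
        then show ?thesis using E b'V b' unfolding A_def B_def by blast
      next
        case False
        then have "b \<in> U" using Bcases b by blast
        then have "b' \<in> A" using allU E b'V by blast
        then show ?thesis using b' unfolding B_def by blast
      qed
    qed
  qed
qed


theorem theorem4p1:
  fixes V :: "'a set" and E :: "'a \<Rightarrow> 'a \<Rightarrow> bool"
  assumes "simple_graph V E"
    and "card V \<ge> 2 * min_degree V E + 2"
  shows "indicated_domination_number V E = card V - min_degree V E \<longleftrightarrow>
         spanning_Kst_indep V E (min_degree V E) (card V - min_degree V E)"
proof -
  note sg = assms(1)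
  define d where "d = min_degree V E"
  define n where "n = card V"
  have nV: "n \<ge> 2 * d + 2" using assms(2) unfolding d_def n_def .
  have finV: "finite V" using sgD(1)[OF sg] .
  have Vne: "V \<noteq> {}" using nV finV unfolding n_def by auto
  have dge: "\<forall>w\<in>V. d \<le> degree V E w"
    unfolding d_def min_degree_def using finV by (intro ballI Min_le) auto
  obtain k where nk: "n = Suc k" using nV by (cases n) auto
  have k1: "k \<ge> 1" using nk nV by simp
  have cardcn: "card (closed_nbhd V E u) = Suc (degree V E u)" if "u \<in> V" for u
    using card_cn[OF sg that] .
  have dom1: "dominated V E {u} = closed_nbhd V E u" for u
    using dom_insert[of V E u "{}"] dom_empty[of V E] by simp
  have cardU1: "card (V - closed_nbhd V E u) = n - Suc (degree V E u)" if "u \<in> V" for u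
    using card_Diff_subset[OF finite_subset[OF cn_sub finV] cn_sub] cardcn[OF that]
    unfolding n_def by simp
  have degle: "Suc (degree V E u) \<le> n" if "u \<in> V" for u
    using card_mono[OF finV cn_sub[of V E u]] cardcn[OF that] unfolding n_def by simp
  obtain x where xV: "x \<in> V" using Vne by blast
  have x0: "x \<in> V - dominated V E {}" using xV dom_empty[of V E] by simp
  have gv: "indicated_domination_number V E = game_val V E (Suc k) {}"
    unfolding indicated_domination_number_def using nk n_def by simp
  have UB: "game_val V E (Suc k) {} \<le> n - d"
  proof (rule step_bound[OF sg x0])
    fix u assume u: "u \<in> closed_nbhd V E x"
    then have uV: "u \<in> V" using cn_sub[of V E x] by blast
    have "game_val V E k (insert u {}) \<le> card (V - dominated V E {u})" using ub[OF sg] by simp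
    also have "\<dots> = n - Suc (degree V E u)" using dom1 cardU1[OF uV] by simp
    finally have g: "game_val V E k (insert u {}) \<le> n - Suc (degree V E u)" .
    have "d \<le> degree V E u" using dge uV by blast
    then show "1 + game_val V E k (insert u {}) \<le> n - d"
      using g degle[OF uV] by linarith
  qed
  show ?thesis
    unfolding d_def[symmetric] n_def[symmetric]
  proof
    assume eq: "indicated_domination_number V E = n - d"
    show "spanning_Kst_indep V E d (n - d)"
    proof (rule ccontr)
      assume nsp: "\<not> spanning_Kst_indep V E d (n - d)"
      have "game_val V E (Suc k) {} \<le> n - d - 1"
      proof (rule step_bound[OF sg x0])
        fix u assume u: "u \<in> closed_nbhd V E x"
        then have uV: "u \<in> V" using cn_sub[of V E x] by blast
        define U where "U = V - closed_nbhd V E u"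
        have cU: "card U = n - Suc (degree V E u)" unfolding U_def using cardU1[OF uV] .
        have finU: "finite U" unfolding U_def using finV by simp
        show "1 + game_val V E k (insert u {}) \<le> n - d - 1"
        proof (cases "degree V E u > d")
          case True
          have "game_val V E k (insert u {}) \<le> card (V - dominated V E {u})" using ub[OF sg] by simp
          also have "\<dots> = n - Suc (degree V E u)" using dom1 cardU1[OF uV] by simp
          finally show ?thesis using True degle[OF uV] by linarith
        next
          case False
          moreover have "d \<le> degree V E u" using dge uV by blast
          ultimately have du: "degree V E u = d" by simp
          show ?thesis
          proof (cases "\<exists>z\<in>U. \<forall>y\<in>closed_nbhd V E z. closed_nbhd V E y \<inter> U \<noteq> {z}")
            case True
            then obtain z where zU: "z \<in> U" and zy: "\<forall>y\<in>closed_nbhd V E z. closed_nbhd V E y \<inter> U \<noteq> {z}"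
              by blast
            obtain k' where kk: "k = Suc k'" using k1 by (cases k) auto
            have z1: "z \<in> V - dominated V E {u}" using zU dom1 unfolding U_def by simp
            have "game_val V E (Suc k') {u} \<le> n - d - 2"
            proof (rule step_bound[OF sg z1])
              fix y assume y: "y \<in> closed_nbhd V E z"
              have zV: "z \<in> V" using zU unfolding U_def by blast
              have zin: "z \<in> closed_nbhd V E y \<inter> U" using cn_sym[OF sg y zV] zU by blast
              have "closed_nbhd V E y \<inter> U \<noteq> {z}" using zy y by blast
              then obtain z2 where z2: "z2 \<in> closed_nbhd V E y \<inter> U" "z2 \<noteq> z" using zin by blast
              have g1: "game_val V E k' (insert y {u}) \<le> card (V - dominated V E (insert y {u}))"
                using ub[OF sg] .
              have domyu: "dominated V E (insert y {u}) = closed_nbhd V E y \<union> closed_nbhd V E u"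
                using dom_insert[of V E y "{u}"] dom1[of u] by simp
              have sub: "V - dominated V E (insert y {u}) \<subseteq> U - {z, z2}"
              proof
                fix w assume w: "w \<in> V - dominated V E (insert y {u})"
                then have w1: "w \<in> V" "w \<notin> closed_nbhd V E y" "w \<notin> closed_nbhd V E u"
                  unfolding domyu by auto
                then have "w \<in> U" unfolding U_def by simp
                moreover have "w \<noteq> z" "w \<noteq> z2" using w1(2) zin z2(1) by auto
                ultimately show "w \<in> U - {z, z2}" by simp
              qed
              have c1: "card (V - dominated V E (insert y {u})) \<le> card (U - {z, z2})"
                using card_mono[OF _ sub] finU by simp
              have zz: "{z, z2} \<subseteq> U" using zin z2(1) by simp
              have "card (U - {z, z2}) = card U - card {z, z2}"
                using card_Diff_subset[OF _ zz] by simp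
              also have "card {z, z2} = 2" using z2(2) by simp
              finally have c2: "card (U - {z, z2}) = card U - 2" .
              have c3: "2 \<le> card U" using card_mono[OF finU zz] \<open>card {z, z2} = 2\<close> by simp
              have "game_val V E k' (insert y {u}) \<le> card U - 2" using g1 c1 c2 by linarith
              then show "1 + game_val V E k' (insert y {u}) \<le> n - d - 2"
                using c3 cU du nV by arith
            qed
            then show ?thesis using kk nV by simp
          next
            case False
            then have hyp: "\<forall>z \<in> V - closed_nbhd V E u. \<exists>y\<in>closed_nbhd V E z.
                 closed_nbhd V E y \<inter> (V - closed_nbhd V E u) = {z}" unfolding U_def by blast
            have "spanning_Kst_indep V E d (card V - d)"
              using struct[OF sg uV du dge _ hyp] nV unfolding n_def by simp
            then show ?thesis using nsp unfolding n_def by simp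
          qed
        qed
      qed
      then show False using eq nV gv by simp
    qed
  next
    assume "spanning_Kst_indep V E d (n - d)"
    then obtain A B where AB: "A \<union> B = V" "A \<inter> B = {}" "card A = d" "card B = n - d"
      "\<forall>a\<in>A. \<forall>b\<in>B. E a b" "\<forall>b\<in>B. \<forall>b'\<in>B. \<not> E b b'"
      unfolding spanning_Kst_indep_def by blast
    have Bne: "B \<noteq> {}" using AB(4) nV by auto
    have "min n (card (B - {})) \<le> game_val V E n {}"
      using lb[OF sg AB(1,2,5,6) Bne, of "{}" n] by simp
    then have "n - d \<le> indicated_domination_number V E"
      unfolding indicated_domination_number_def n_def[symmetric] using AB(4) by simp
    then show "indicated_domination_number V E = n - d" using UB gv by simp
  qed
qed

end
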